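(* Fix $\theta \in (0,\pi)$. For $n \in \mathbb{N}$ let $M_n(\theta)$ denote the real symmetric tridiagonal $2n \times 2n$ matrix whose diagonal entries are $(1+\cos\theta, 0, 0, \dots, 0, -(1+\cos\theta))$ (i.e. the $(1,1)$ entry is $1+\cos\theta$, the $(2n,2n)$ entry is $-(1+\cos\theta)$, and all other diagonal entries are $0$), and whose sub- and super-diagonal entries are all equal to $\sin\theta$. Define $f_n:\mathbb{R}\setminus\{\frac{k}{n+1}\pi \mid k\in\mathbb{Z}\}\to\mathbb{R}$ by $f_n(\phi)=\dfrac{\sin((n-1)\phi)}{\sin((n+1)\phi)}$; for $k \in [0,n]\cap\mathbb{Z}$ let $I_{n,k}=\left(\frac{k}{n+1}\pi,\frac{k+1}{n+1}\pi\right)$; and let $Z_n=\{\phi\in\mathbb{R} \mid (1+\cos\theta)^2\sin((n-1)\phi)=\sin^2(\theta)\sin((n+1)\phi)\}$. For a set $I\subset\mathbb{R}$ write $2\sin\theta\cos(I)=\{2\sin\theta\cos\phi \mid \phi\in I\}$, and let $\sigma(M)$ denote the set of eigenvalues of a matrix $M$. Then: (i) For every $n\in\mathbb{N}$ and every $\phi\in[0,\pi]$ (at which $f_{2n}$ is defined), $f_{2n}(\phi)=f_{2n}(\pi-\phi)=f_{2n}(\pi+\phi)$. (ii) For all sufficiently large $n$, $f_{2n}$ is monotone on each of the intervals $\left(0,\frac{\pi}{2(2n+1)}\right)$ and $\left(\pi-\frac{\pi}{2(2n+1)},\pi\right)$. (iii) For all sufficiently large $n$ and every $k\in([1,2n-1]\cap\mathbb{N})\setminus\{n\}$,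 $f_{2n}$ is monotone on each of $\left[\frac{\pi}{2(2n+1)},\frac{\pi}{2n+1}\right)$, $I_{2n,k}$, and $\left(\frac{2n\pi}{2n+1},\pi-\frac{\pi}{2(2n+1)}\right]$. (iv) If $\theta\neq\frac{\pi}{2}$, then for all sufficiently large $n$: $\#(Z_{2n}\cap I_{2n,0})\le 3$, $\#(Z_{2n}\cap I_{2n,2n})\le 3$, $Z_{2n}\cap I_{2n,n}=\emptyset$, $\{0,\pi\}\subset Z_{2n}$, and $\#(Z_{2n}\cap I_{2n,k})=1$ for every $k\in([1,2n-1]\cap\mathbb{N})\setminus\{n\}$. (v) If $\theta=\frac{\pi}{2}$, then $Z_{2n}\cap[0,\pi]\subset\{0,\pi\}\cup\left\{\frac{1}{4n}\pi,\frac{3}{4n}\pi,\dots,\frac{4n-1}{4n}\pi\right\}$. (vi) If $\theta\neq\frac{\pi}{2}$, then for all sufficiently large $n$: $\#(\sigma(M_n(\theta))\cap 2\sin\theta\cos(I_{2n,0}))\le 3$, $\#(\sigma(M_n(\theta))\cap 2\sin\theta\cos(I_{2n,2n}))\le 3$, $\sigma(M_n(\theta))\cap 2\sin\theta\cos(I_{2n,n})=\emptyset$, and $\#(\sigma(M_n(\theta))\cap 2\sin\theta\cos(I_{2n,k}))\le 1$ for every $k\in([1,2n-1]\cap\mathbb{N})\setminus\{n\}$. (vii) If $\theta=\frac{\pi}{2}$, then for every $n\in\mathbb{N}$, $\sigma(M_n(\theta))\subset\{-2,2\}\cup\left\{2\cos\left(\frac{2k-1}{4n}\pi\right) \mid k=1,2,\dots,2n\right\}$.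 (viii) Let $\varepsilon>0$, $\lambda_0\in(-2\sin\theta,2\sin\theta)$ and $\eta>0$ with $|\lambda_0|+\eta<2\sin\theta$. Then there exists $n_0\in\mathbb{N}$ such that for every $n\ge n_0$, every eigenvalue $\lambda$ of $M_n(\theta)$ with $\lambda\in(\lambda_0-\eta,\lambda_0+\eta)$, and every unit eigenvector $u=(u_1,\dots,u_{2n})\in\mathbb{C}^{2n}$ of $M_n(\theta)$ corresponding to $\lambda$, one has $|u_{2n}|<\varepsilon$.
   Context: In the paper, $M_n(\theta)$ is denoted $A_n(\theta)+B_n(\theta)$; it is the sum of the two reflections $A_n(\theta)=2P_n(\theta)-\mathrm{id}$, $B_n(\theta)=2Q_n(\theta)-\mathrm{id}$ of a $2n$-dimensional truncation of a constant-angle pair of orthogonal projections, and equals the explicit tridiagonal matrix described in the claim. $\#S$ denotes the cardinality of a set $S$. *)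

theory Defs
  imports Complex_Main "Jordan_Normal_Form.Char_Poly"
begin

definition Mmat :: "real \<Rightarrow> nat \<Rightarrow> real mat" where
  "Mmat \<theta> n = mat (2*n) (2*n) (\<lambda>(i,j).
     if i = j then (if i = 0 then 1 + cos \<theta>
                    else if i = 2*n - 1 then - (1 + cos \<theta>) else 0)
     else if i = j + 1 \<or> j = i + 1 then sin \<theta> else 0)"

text \<open>Spectrum: set of eigenvalues (real symmetric matrix, so all eigenvalues are real).\<close>
definition spec :: "real mat \<Rightarrow> real set" where
  "spec M = {x. eigenvalue M x}"

definition fdom :: "nat \<Rightarrow> real set" where
  "fdom n = UNIV - {real_of_int k / (real n + 1) * pi | k. True}"

definition fn :: "nat \<Rightarrow> real \<Rightarrow> real" where
  "fn n \<phi> = sin ((real n - 1) * \<phi>) / sin ((real n + 1) * \<phi>)"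

definition Iint :: "nat \<Rightarrow> nat \<Rightarrow> real set" where
  "Iint n k = {real k / (real n + 1) * pi <..< (real k + 1) / (real n + 1) * pi}"

definition Zset :: "real \<Rightarrow> nat \<Rightarrow> real set" where
  "Zset \<theta> n = {\<phi>. (1 + cos \<theta>)^2 * sin ((real n - 1) * \<phi>) = (sin \<theta>)^2 * sin ((real n + 1) * \<phi>)}"

definition cosimg :: "real \<Rightarrow> real set \<Rightarrow> real set" where
  "cosimg \<theta> I = (\<lambda>\<phi>. 2 * sin \<theta> * cos \<phi>) ` I"

definition monot_on :: "real set \<Rightarrow> (real \<Rightarrow> real) \<Rightarrow> bool" where
  "monot_on S f \<longleftrightarrow> mono_on S f \<or> antimono_on S f"

end

theory Submission
  imports Defs
begin

lemma tri_row:
  fixes f :: "nat \<times> nat \<Rightarrow> 'a::comm_ring_1"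
  assumes v: "v \<in> carrier_vec N" and i: "i < N"
    and z: "\<And>j. j < N \<Longrightarrow> j \<noteq> i \<Longrightarrow> j + 1 \<noteq> i \<Longrightarrow> j \<noteq> i + 1 \<Longrightarrow> f (i,j) = 0"
  shows "(mat N N f *\<^sub>v v) $ i = f (i,i) * v $ i + (if 0 < i then f (i,i-1) * v $ (i-1) else 0)
           + (if i + 1 < N then f (i,i+1) * v $ (i+1) else 0)"
proof -
  let ?g = "\<lambda>j. f (i,j) * v $ j"
  have "(mat N N f *\<^sub>v v) $ i = (\<Sum>j\<in>{0..<N}. ?g j)"
    using v i by (simp add: scalar_prod_def)
  also have "\<dots> = (\<Sum>j\<in>{0..<N} \<inter> {i-1, i, i+1}. ?g j)"
  proof (rule sum.mono_neutral_right)
    show "\<forall>j\<in>{0..<N} - {0..<N} \<inter> {i-1, i, i+1}. ?g j = 0"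
    proof
      fix j assume "j \<in> {0..<N} - {0..<N} \<inter> {i-1, i, i+1}"
      then have "j < N" "j \<noteq> i" "j + 1 \<noteq> i" "j \<noteq> i + 1" by auto
      then show "?g j = 0" using z by simp
    qed
  qed auto
  also have "\<dots> = ?g i + (if 0 < i then ?g (i-1) else 0) + (if i + 1 < N then ?g (i+1) else 0)"
  proof (cases "0 < i")
    case True
    then show ?thesis using i
      by (cases "i+1<N") (auto simp: insert_commute Int_insert_right)
  next
    case False
    then show ?thesis using i
      by (cases "i+1<N") (auto simp: insert_commute Int_insert_right)
  qed
  finally show ?thesis .
qed


lemma Mmat_row:
  assumes v: "v \<in> carrier_vec (2*n)" and i: "i < 2*n"
  shows "(Mmat \<theta> n *\<^sub>v v) $ i =
     (if i = 0 then 1 + cos \<theta> else if i = 2*n - 1 then - (1 + cos \<theta>) else 0) * v $ i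
     + (if 0 < i then sin \<theta> * v $ (i-1) else 0)
     + (if i + 1 < 2*n then sin \<theta> * v $ (i+1) else 0)"
  unfolding Mmat_def
  by (subst tri_row[OF v i]) auto

lemma Mmat_map: "map_mat complex_of_real (Mmat \<theta> n) = mat (2*n) (2*n) (\<lambda>(i,j).
     if i = j then (if i = 0 then complex_of_real (1 + cos \<theta>)
                    else if i = 2*n - 1 then - complex_of_real (1 + cos \<theta>) else 0)
     else if i = j + 1 \<or> j = i + 1 then complex_of_real (sin \<theta>) else 0)"
  unfolding Mmat_def by (rule eq_matI) auto

lemma Mmatc_row:
  assumes v: "v \<in> carrier_vec (2*n)" and i: "i < 2*n"
  shows "(map_mat complex_of_real (Mmat \<theta> n) *\<^sub>v v) $ i =
     (if i = 0 then complex_of_real (1 + cos \<theta>) else if i = 2*n - 1 then - complex_of_real (1 + cos \<theta>) else 0) * v $ i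
     + (if 0 < i then complex_of_real (sin \<theta>) * v $ (i-1) else 0)
     + (if i + 1 < 2*n then complex_of_real (sin \<theta>) * v $ (i+1) else 0)"
  unfolding Mmat_map
  by (subst tri_row[OF v i]) auto

lemma sin_rec: "sin (real (j+2) * x) + sin (real j * x) = 2 * cos x * sin (real (j+1) * x)"
proof -
  have a: "real (j+2) * x = real (j+1) * x + x" by (simp add: algebra_simps)
  have b: "real j * x = real (j+1) * x - x" by (simp add: algebra_simps)
  show ?thesis unfolding a b sin_add sin_diff by (simp add: algebra_simps)
qed

lemma eig_rel:
  fixes v :: "real vec"
  assumes n: "n \<ge> 1" and th: "0 < \<theta>" "\<theta> < pi"
    and ev: "eigenvector (Mmat \<theta> n) v lam"
    and lam: "lam = 2 * sin \<theta> * cos \<phi>" and sphi: "sin \<phi> \<noteq> 0"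
  shows "(1 + cos \<theta>)^2 * sin ((real (2*n) - 1) * \<phi>) = (sin \<theta>)^2 * sin ((real (2*n) + 1) * \<phi>)"
proof -
  define a where "a = 1 + cos \<theta>"
  define s where "s = sin \<theta>"
  define N where "N = 2*n"
  have s0: "s \<noteq> 0" unfolding s_def using th sin_gt_zero by force
  have N2: "N \<ge> 2" using n N_def by simp
  have dimM: "dim_row (Mmat \<theta> n) = N" unfolding Mmat_def N_def by simp
  have vc: "v \<in> carrier_vec N" and v0: "v \<noteq> 0\<^sub>v N" and eq: "Mmat \<theta> n *\<^sub>v v = lam \<cdot>\<^sub>v v"
    using ev unfolding eigenvector_def dimM by auto
  have row: "(Mmat \<theta> n *\<^sub>v v) $ i = lam * v $ i" if "i < N" for i
    using eq that vc by simp
  have r0: "a * v$0 + s * v$1 = lam * v$0"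
    using row[of 0] Mmat_row[OF vc[unfolded N_def], of 0 \<theta>] N2 unfolding a_def s_def N_def by simp
  have ri: "s * v$(i-1) + s * v$(i+1) = lam * v$i" if "0 < i" "i + 1 < N" for i
  proof -
    have "i \<noteq> 2*n - 1" using that N_def by simp
    then show ?thesis
      using row[of i] Mmat_row[OF vc[unfolded N_def], of i \<theta>] that unfolding a_def s_def N_def by simp
  qed
  have rl: "s * v$(N-2) - a * v$(N-1) = lam * v$(N-1)"
    using row[of "N-1"] Mmat_row[OF vc[unfolded N_def], of "N-1" \<theta>] N2 unfolding a_def s_def N_def
    by (simp add: numeral_2_eq_2 algebra_simps)
  define w where "w j = s * sin (real (j+1) * \<phi>) - a * sin (real j * \<phi>)" for j :: nat
  have wrec: "s * (w (j+2) + w j) = lam * w (j+1)" for j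
  proof -
    have "w (j+2) + w j = s * (sin (real ((j+1)+2) * \<phi>) + sin (real (j+1) * \<phi>))
             - a * (sin (real (j+2) * \<phi>) + sin (real j * \<phi>))"
      unfolding w_def by (simp add: algebra_simps)
    also have "\<dots> = 2 * cos \<phi> * w (j+1)"
      unfolding sin_rec w_def by (simp add: algebra_simps)
    finally show ?thesis unfolding lam s_def by (simp add: algebra_simps)
  qed
  have claim: "j + 1 < N \<longrightarrow> s * sin \<phi> * v$j = v$0 * w j \<and> s * sin \<phi> * v$(j+1) = v$0 * w (j+1)" for j
  proof (induction j)
    case 0
    have q: "s * v$1 = (lam - a) * v$0" using r0 by (simp add: algebra_simps)
    have "s * sin \<phi> * v$1 = sin \<phi> * (s * v$1)" by simp
    also have "\<dots> = sin \<phi> * (lam - a) * v$0" unfolding q by simp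
    finally have "s * sin \<phi> * v$1 = sin \<phi> * (lam - a) * v$0" .
    moreover have "sin \<phi> * (lam - a) * v$0 = v$0 * w 1"
    proof -
      have "sin (\<phi> * 2) = 2 * sin \<phi> * cos \<phi>" using sin_double[of \<phi>] by (simp add: mult.commute)
      then show ?thesis unfolding w_def lam s_def by (simp add: algebra_simps)
    qed
    ultimately show ?case unfolding w_def by simp
  next
    case (Suc j)
    show ?case
    proof
      assume j: "Suc j + 1 < N"
      then have ih: "s * sin \<phi> * v$j = v$0 * w j" "s * sin \<phi> * v$(j+1) = v$0 * w (j+1)"
        using Suc by auto
      have r: "s * v$j + s * v$(j+2) = lam * v$(j+1)" using ri[of "j+1"] j by simp
      have "s * (s * sin \<phi> * v$(j+2)) = s * (v$0 * w (j+2))"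
      proof -
        have r': "s*v$(j+2) = lam*v$(j+1) - s*v$j" using r by linarith
        have "s * (s * sin \<phi> * v$(j+2)) = (s * sin \<phi>) * (s*v$(j+2))" by (simp add: ac_simps)
        also have "\<dots> = (s * sin \<phi>) * (lam*v$(j+1) - s*v$j)" by (simp only: r')
        also have "\<dots> = lam * (s * sin \<phi> * v$(j+1)) - s * (s * sin \<phi> * v$j)" by (simp add: algebra_simps)
        also have "\<dots> = v$0 * (lam * w (j+1) - s * w j)" unfolding ih by (simp add: algebra_simps)
        also have "lam * w (j+1) - s * w j = s * w (j+2)" using wrec[of j] by (simp add: algebra_simps)
        also have "v$0 * (s * w (j+2)) = s * (v$0 * w (j+2))" by simp
        finally show ?thesis .
      qed
      then have "s * sin \<phi> * v$(j+2) = v$0 * w (j+2)" using s0 by simp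
      then show "s * sin \<phi> * v$Suc j = v$0 * w (Suc j) \<and> s * sin \<phi> * v$(Suc j+1) = v$0 * w (Suc j+1)"
        using ih by simp
    qed
  qed
  have x0: "v$0 \<noteq> 0"
  proof
    assume z: "v$0 = 0"
    have "v = 0\<^sub>v N"
    proof (rule eq_vecI)
      fix i assume "i < dim_vec (0\<^sub>v N :: real vec)"
      then have i: "i < N" by simp
      have "s * sin \<phi> * v$i = 0"
      proof (cases "i + 1 < N")
        case True then show ?thesis using claim[of i] z by simp
      next
        case False
        define k where "k = i - 1"
        have k: "i = k + 1" using False N2 unfolding k_def by simp
        then have "k + 1 < N" using i by simp
        then show ?thesis using claim[of k] z k by simp
      qed
      then show "v$i = 0\<^sub>v N $ i" using s0 sphi i by simp
    next
      show "dim_vec v = dim_vec (0\<^sub>v N :: real vec)" using vc by simp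
    qed
    then show False using v0 by simp
  qed
  have c1: "s * sin \<phi> * v$(N-2) = v$0 * w (N-2)" using claim[of "N-2"] N2 by simp
  have c2: "s * sin \<phi> * v$(N-1) = v$0 * w (N-1)" using claim[of "N-2"] N2
    by (simp add: Suc_diff_Suc numeral_2_eq_2)
  have "v$0 * (s * w (N-2) - (a + lam) * w (N-1)) = s * sin \<phi> * (s * v$(N-2) - a * v$(N-1) - lam * v$(N-1))"
  proof -
    have "s * sin \<phi> * (s * v$(N-2) - a * v$(N-1) - lam * v$(N-1)) = s*(s*sin \<phi>*v$(N-2)) - (a+lam)*(s*sin \<phi>*v$(N-1))"
      by (simp add: algebra_simps)
    also have "\<dots> = s*(v$0*w(N-2)) - (a+lam)*(v$0*w(N-1))" by (simp only: c1 c2)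
    finally show ?thesis by (simp add: algebra_simps)
  qed
  also have "\<dots> = 0" using rl by simp
  finally have e: "s * w (N-2) - (a + lam) * w (N-1) = 0" using x0 by simp
  have nn: "N-2+2 = N" "N-2+1 = N-1" using N2 by auto
  have "s * (w N + w (N-2)) = lam * w (N-1)" using wrec[of "N-2"] unfolding nn .
  then have "a * w (N-1) + s * w N = 0" using e by (simp add: algebra_simps)
  moreover have "a * w (N-1) + s * w N = s^2 * sin ((real N + 1) * \<phi>) - a^2 * sin ((real N - 1) * \<phi>)"
  proof -
    have e1: "real (N-1+1) = real N" "real (N-1) = real N - 1" "real (N+1) = real N + 1" using N2 by auto
    show ?thesis unfolding w_def e1 by (simp add: algebra_simps power2_eq_square)
  qed
  ultimately show ?thesis unfolding a_def s_def N_def by simp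
qed


lemma sin_mult_le:
  fixes x :: real
  assumes "sin x \<noteq> 0"
  shows "\<bar>sin (real (Suc m) * x)\<bar> \<le> real (Suc m) * \<bar>sin x\<bar> \<and> (m \<ge> 1 \<longrightarrow> \<bar>sin (real (Suc m) * x)\<bar> < real (Suc m) * \<bar>sin x\<bar>)"
proof (induction m)
  case 0 then show ?case by simp
next
  case (Suc m)
  have e: "real (Suc (Suc m)) * x = real (Suc m) * x + x" by (simp add: algebra_simps)
  have c1: "\<bar>cos x\<bar> < 1"
  proof -
    have "(sin x)^2 + (cos x)^2 = 1" by simp
    moreover have "(sin x)^2 > 0" using assms by simp
    ultimately have "(cos x)^2 < 1" by linarith
    then show ?thesis by (simp add: abs_square_less_1)
  qed
  have b: "\<bar>sin (real (Suc (Suc m)) * x)\<bar> \<le> \<bar>sin (real (Suc m) * x)\<bar> * \<bar>cos x\<bar> + \<bar>sin x\<bar>"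
  proof -
    have "\<bar>sin (real (Suc (Suc m)) * x)\<bar> = \<bar>sin (real (Suc m) * x) * cos x + cos (real (Suc m) * x) * sin x\<bar>"
      unfolding e sin_add by simp
    also have "\<dots> \<le> \<bar>sin (real (Suc m) * x)\<bar> * \<bar>cos x\<bar> + \<bar>cos (real (Suc m) * x)\<bar> * \<bar>sin x\<bar>"
      by (metis abs_mult abs_triangle_ineq)
    also have "\<dots> \<le> \<bar>sin (real (Suc m) * x)\<bar> * \<bar>cos x\<bar> + \<bar>sin x\<bar>"
      using abs_cos_le_one[of "real (Suc m) * x"] by (simp add: mult_left_le_one_le)
    finally show ?thesis .
  qed
  have "\<bar>sin (real (Suc m) * x)\<bar> * \<bar>cos x\<bar> < real (Suc m) * \<bar>sin x\<bar>"
  proof (cases "sin (real (Suc m) * x) = 0")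
    case True then show ?thesis using assms by simp
  next
    case False
    then have "\<bar>sin (real (Suc m) * x)\<bar> * \<bar>cos x\<bar> < \<bar>sin (real (Suc m) * x)\<bar>"
      using c1 by (simp add: mult_less_cancel_left1)
    then show ?thesis using Suc.IH by linarith
  qed
  then show ?case using b by (simp add: distrib_right)
qed

lemma sin_mult_strict:
  fixes x :: real
  assumes "sin x \<noteq> 0" "N \<ge> 2"
  shows "\<bar>sin (real N * x)\<bar> < real N * \<bar>sin x\<bar>"
proof -
  define m where "m = N - 1"
  have "N = Suc m" "m \<ge> 1" using assms unfolding m_def by auto
  then show ?thesis using sin_mult_le[OF assms(1), of m] by simp
qed

lemma g_pos:
  assumes "N \<ge> 2" "0 < x" "x < pi/2"
  shows "real N * sin (2*x) - sin (2 * real N * x) > 0"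
proof -
  have s: "sin (2*x) > 0" using assms by (intro sin_gt_zero) auto
  have "sin (real N * (2*x)) < real N * \<bar>sin (2*x)\<bar>" using sin_mult_strict[of "2*x" N] s assms by simp
  then show ?thesis using s by (simp add: algebra_simps)
qed

lemma g_neg:
  assumes "N \<ge> 2" "pi/2 < x" "x < pi"
  shows "real N * sin (2*x) - sin (2 * real N * x) < 0"
proof -
  have s: "sin (2*x) < 0" using assms by (intro sin_lt_zero) auto
  have "\<bar>sin (real N * (2*x))\<bar> < real N * \<bar>sin (2*x)\<bar>" using sin_mult_strict[of "2*x" N] s assms by simp
  then show ?thesis using s by (simp add: algebra_simps)
qed

lemma fn_deriv:
  assumes "sin ((real N + 1) * x) \<noteq> 0"
  shows "DERIV (fn N) x :> (real N * sin (2*x) - sin (2 * real N * x)) / (sin ((real N + 1) * x))^2"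
proof -
  have d1: "((\<lambda>x. sin (c*x)) has_real_derivative cos (c*x) * c) (at x)" for c :: real
    by (auto intro!: derivative_eq_intros)
  have "DERIV (\<lambda>x. sin ((real N - 1) * x) / sin ((real N + 1) * x)) x :>
     (cos ((real N - 1) * x) * (real N - 1) * sin ((real N + 1) * x) - cos ((real N + 1) * x) * (real N + 1) * sin ((real N - 1) * x))
        / (sin ((real N + 1) * x) ^ Suc (Suc 0))"
    by (rule DERIV_quotient[OF d1 d1 assms])
  moreover have "cos ((real N - 1) * x) * (real N - 1) * sin ((real N + 1) * x) - cos ((real N + 1) * x) * (real N + 1) * sin ((real N - 1) * x)
      = real N * sin (2*x) - sin (2 * real N * x)"
  proof -
    have a: "2*x = (real N + 1) * x - (real N - 1) * x" by (simp add: algebra_simps)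
    have b: "2 * real N * x = (real N - 1) * x + (real N + 1) * x" by (simp add: algebra_simps)
    show ?thesis unfolding a b sin_diff sin_add by (simp add: algebra_simps)
  qed
  ultimately show ?thesis unfolding fn_def by (simp add: power2_eq_square)
qed

lemma fn_inc:
  assumes N: "N \<ge> 2" and xy: "x < y" "0 < x" "y < pi/2"
    and nz: "\<And>t. x \<le> t \<Longrightarrow> t \<le> y \<Longrightarrow> sin ((real N + 1) * t) \<noteq> 0"
  shows "fn N x < fn N y"
proof (rule DERIV_pos_imp_increasing[OF xy(1)])
  fix t assume t: "x \<le> t" "t \<le> y"
  show "\<exists>d. DERIV (fn N) t :> d \<and> d > 0"
    using fn_deriv[OF nz[OF t]] g_pos[OF N, of t] t xy nz[OF t] by (intro exI[of _ "(real N * sin (2*t) - sin (2 * real N * t)) / (sin ((real N + 1) * t))^2"]) auto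
qed

lemma fn_dec:
  assumes N: "N \<ge> 2" and xy: "x < y" "pi/2 < x" "y < pi"
    and nz: "\<And>t. x \<le> t \<Longrightarrow> t \<le> y \<Longrightarrow> sin ((real N + 1) * t) \<noteq> 0"
  shows "fn N x > fn N y"
proof (rule DERIV_neg_imp_decreasing[OF xy(1)])
  fix t assume t: "x \<le> t" "t \<le> y"
  show "\<exists>d. DERIV (fn N) t :> d \<and> d < 0"
    using fn_deriv[OF nz[OF t]] g_neg[OF N, of t] t xy nz[OF t] by (intro exI[of _ "(real N * sin (2*t) - sin (2 * real N * t)) / (sin ((real N + 1) * t))^2"]) (auto simp: divide_neg_pos)
qed

lemma sin_nz_between:
  fixes z :: real and k :: nat
  assumes "real k * pi < z" "z < (real k + 1) * pi"
  shows "sin z \<noteq> 0"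
proof
  assume "sin z = 0"
  then obtain i :: int where i: "z = of_int i * pi" using sin_zero_iff_int2 by blast
  have "real k < of_int i" "of_int i < real k + 1" using assms unfolding i by auto
  then have "int k < i" "i < int k + 1" by linarith+
  then show False by simp
qed


lemma sin_odd_reflect:
  assumes "odd m"
  shows "sin (real m * (pi - x)) = sin (real m * x)" "sin (real m * (pi + x)) = - sin (real m * x)"
proof -
  have c: "cos (real m * pi) = -1" using assms by simp
  show "sin (real m * (pi - x)) = sin (real m * x)"
    unfolding right_diff_distrib sin_diff using c by simp
  show "sin (real m * (pi + x)) = - sin (real m * x)"
    unfolding distrib_left sin_add using c by simp
qed

lemma part_i:
  assumes "n \<ge> 1"
  shows "fn (2*n) \<phi> = fn (2*n) (pi - \<phi>) \<and> fn (2*n) \<phi> = fn (2*n) (pi + \<phi>)"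
proof -
  have e1: "real (2*n) - 1 = real (2*n-1)" using assms by simp
  have e2: "real (2*n) + 1 = real (2*n+1)" by simp
  have o1: "odd (2*n-1)" using assms by simp
  have o2: "odd (2*n+1)" by simp
  show ?thesis unfolding fn_def e1 e2 sin_odd_reflect[OF o1] sin_odd_reflect[OF o2] by simp
qed

lemma sin_nz_region:
  fixes k :: nat
  assumes "real k * pi / (real N + 1) < t" "t < (real k + 1) * pi / (real N + 1)"
  shows "sin ((real N + 1) * t) \<noteq> 0"
proof (rule sin_nz_between[of k])
  have p: "real N + 1 > 0" by simp
  show "real k * pi < (real N + 1) * t" using assms(1) p by (simp add: field_simps)
  show "(real N + 1) * t < (real k + 1) * pi" using assms(2) p by (simp add: field_simps)
qed

lemma region_inc:
  fixes k :: nat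
  assumes N: "N \<ge> 2" and lo: "real k * pi / (real N + 1) \<le> lo" "0 \<le> lo"
    and hi: "hi \<le> (real k + 1) * pi / (real N + 1)" "hi \<le> pi/2"
    and x: "lo < x" and y: "y < hi" and xy: "x < y"
  shows "fn N x < fn N y"
proof (rule fn_inc[OF N xy])
  show "0 < x" using lo x by linarith
  show "y < pi/2" using hi y by linarith
  fix t assume t: "x \<le> t" "t \<le> y"
  show "sin ((real N + 1) * t) \<noteq> 0" by (rule sin_nz_region[of k]) (use t lo hi x y in linarith)+
qed

lemma region_dec:
  fixes k :: nat
  assumes N: "N \<ge> 2" and lo: "real k * pi / (real N + 1) \<le> lo" "pi/2 \<le> lo"
    and hi: "hi \<le> (real k + 1) * pi / (real N + 1)" "hi \<le> pi"
    and x: "lo < x" and y: "y < hi" and xy: "x < y"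
  shows "fn N x > fn N y"
proof (rule fn_dec[OF N xy])
  show "pi/2 < x" using lo x by linarith
  show "y < pi" using hi y by linarith
  fix t assume t: "x \<le> t" "t \<le> y"
  show "sin ((real N + 1) * t) \<noteq> 0" by (rule sin_nz_region[of k]) (use t lo hi x y in linarith)+
qed

lemma monot_inc_lemma:
  assumes "\<And>x y. x \<in> J \<Longrightarrow> y \<in> J \<Longrightarrow> x < y \<Longrightarrow> f x < f y"
  shows "monot_on J f"
  unfolding monot_on_def
  by (rule disjI1, rule monotone_onI) (metis assms order_le_less less_imp_le)

lemma monot_dec_lemma:
  assumes "\<And>x y. x \<in> J \<Longrightarrow> y \<in> J \<Longrightarrow> x < y \<Longrightarrow> f x > f y"
  shows "monot_on J f"
  unfolding monot_on_def
  by (rule disjI2, rule monotone_onI) (metis assms order_le_less less_imp_le)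


lemma part_ii:
  assumes n: "n \<ge> 1"
  shows "monot_on {0 <..< pi / (2 * (2 * real n + 1))} (fn (2*n)) \<and>
       monot_on {pi - pi / (2 * (2 * real n + 1)) <..< pi} (fn (2*n))"
proof
  have N: "2*n \<ge> 2" using n by simp
  have p: "2 * real n + 1 > 0" by simp
  have n1: "real n \<ge> 1" using n by simp
  show "monot_on {0 <..< pi / (2 * (2 * real n + 1))} (fn (2*n))"
  proof (rule monot_inc_lemma)
    fix x y assume "x \<in> {0 <..< pi / (2 * (2 * real n + 1))}" "y \<in> {0 <..< pi / (2 * (2 * real n + 1))}" "x < y"
    then show "fn (2*n) x < fn (2*n) y"
      by (intro region_inc[OF N, of 0 0 "pi / (2 * (2 * real n + 1))"])
         (use p n1 pi_gt_zero in \<open>auto simp: field_simps\<close>)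
  qed
  show "monot_on {pi - pi / (2 * (2 * real n + 1)) <..< pi} (fn (2*n))"
  proof (rule monot_dec_lemma)
    fix x y assume "x \<in> {pi - pi / (2 * (2 * real n + 1)) <..< pi}" "y \<in> {pi - pi / (2 * (2 * real n + 1)) <..< pi}" "x < y"
    then show "fn (2*n) x > fn (2*n) y"
      by (intro region_dec[OF N, of "2*n" "pi - pi / (2 * (2 * real n + 1))" pi])
         (use p n1 pi_gt_zero in \<open>auto simp: field_simps\<close>)
  qed
qed

lemma part_iii:
  assumes n: "n \<ge> 1" and k: "1 \<le> k" "k \<le> 2*n - 1" "k \<noteq> n"
  shows "monot_on {pi / (2 * (2 * real n + 1)) ..< pi / (2 * real n + 1)} (fn (2*n)) \<and>
       monot_on (Iint (2*n) k) (fn (2*n)) \<and>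
       monot_on {2 * real n * pi / (2 * real n + 1) <.. pi - pi / (2 * (2 * real n + 1))} (fn (2*n))"
proof (intro conjI)
  have N: "2*n \<ge> 2" using n by simp
  have p: "2 * real n + 1 > 0" by simp
  have n1: "real n \<ge> 1" using n by simp
  show "monot_on {pi / (2 * (2 * real n + 1)) ..< pi / (2 * real n + 1)} (fn (2*n))"
  proof (rule monot_inc_lemma)
    fix x y assume xy: "x \<in> {pi / (2 * (2 * real n + 1)) ..< pi / (2 * real n + 1)}" "y \<in> {pi / (2 * (2 * real n + 1)) ..< pi / (2 * real n + 1)}" "x < y"
    have q: "0 < pi / (2 * (2 * real n + 1))" by (simp add: p)
    from xy(1) have "pi / (2 * (2 * real n + 1)) \<le> x" by (rule atLeastLessThan_iff[THEN iffD1, THEN conjunct1])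
    then have x0: "0 < x" using q by linarith
    show "fn (2*n) x < fn (2*n) y" using xy x0
      by (intro region_inc[OF N, of 0 0 "pi / (2 * real n + 1)"])
         (use p n1 pi_gt_zero in \<open>auto simp: field_simps\<close>)
  qed
  show "monot_on {2 * real n * pi / (2 * real n + 1) <.. pi - pi / (2 * (2 * real n + 1))} (fn (2*n))"
  proof (rule monot_dec_lemma)
    fix x y assume xy: "x \<in> {2 * real n * pi / (2 * real n + 1) <.. pi - pi / (2 * (2 * real n + 1))}"
      "y \<in> {2 * real n * pi / (2 * real n + 1) <.. pi - pi / (2 * (2 * real n + 1))}" "x < y"
    have q: "0 < pi / (2 * (2 * real n + 1))" by (simp add: p)
    from xy(2) have "y \<le> pi - pi / (2 * (2 * real n + 1))" by (rule greaterThanAtMost_iff[THEN iffD1, THEN conjunct2])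
    then have y0: "y < pi" using q by linarith
    show "fn (2*n) x > fn (2*n) y" using xy y0
      by (intro region_dec[OF N, of "2*n" "2 * real n * pi / (2 * real n + 1)" pi])
         (use p n1 pi_gt_zero in \<open>auto simp: field_simps\<close>)
  qed
  show "monot_on (Iint (2*n) k) (fn (2*n))"
  proof (cases "k < n")
    case True
    then have kn: "real k + 1 \<le> real n" by linarith
    have "0 \<le> pi * (2*real n - 2*real k - 1)" using kn by (intro mult_nonneg_nonneg) auto
    then have kn2: "pi + pi*(real k*2) \<le> pi*(real n*2)" by (simp add: algebra_simps)
    show ?thesis
    proof (rule monot_inc_lemma)
      fix x y assume "x \<in> Iint (2*n) k" "y \<in> Iint (2*n) k" "x < y"
      then show "fn (2*n) x < fn (2*n) y" unfolding Iint_def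
        by (intro region_inc[OF N, of k "real k / (real (2*n) + 1) * pi" "(real k + 1) / (real (2*n) + 1) * pi"])
           (use p n1 kn kn2 pi_gt_zero in \<open>auto simp: field_simps\<close>)
    qed
  next
    case False
    then have kn: "real k \<ge> real n + 1" "real k + 1 \<le> 2 * real n" using k by linarith+
    have "0 \<le> pi * (2*real k - 2*real n - 1)" using kn by (intro mult_nonneg_nonneg) auto
    then have kn2: "pi + pi*(real n*2) \<le> pi*(real k*2)" by (simp add: algebra_simps)
    have "0 \<le> pi * (2*real n - real k - 1)" using kn by (intro mult_nonneg_nonneg) auto
    then have kn3: "pi + pi*(real k) \<le> pi*(real n*2)" by (simp add: algebra_simps)
    show ?thesis
    proof (rule monot_dec_lemma)
      fix x y assume "x \<in> Iint (2*n) k" "y \<in> Iint (2*n) k" "x < y"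
      then show "fn (2*n) x > fn (2*n) y" unfolding Iint_def
        by (intro region_dec[OF N, of k "real k / (real (2*n) + 1) * pi" "(real k + 1) / (real (2*n) + 1) * pi"])
           (use p n1 kn kn2 kn3 pi_gt_zero in \<open>auto simp: field_simps\<close>)
    qed
  qed
qed


lemma atmost1:
  fixes S :: "real set"
  assumes "\<And>x y. x \<in> S \<Longrightarrow> y \<in> S \<Longrightarrow> x < y \<Longrightarrow> False"
  shows "finite S \<and> card S \<le> 1"
proof (cases "S = {}")
  case True then show ?thesis by simp
next
  case False
  then obtain x where x: "x \<in> S" by blast
  have "S \<subseteq> {x}"
  proof
    fix y assume y: "y \<in> S"
    have "\<not> y < x" "\<not> x < y" using assms x y by blast+
    then show "y \<in> {x}" by simp
  qed
  then show ?thesis using finite_subset card_mono by (metis card.empty card.insert empty_iff finite.intros(1) finite.intros(2) One_nat_def)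
qed

lemma a_pos: assumes "0 < \<theta>" "\<theta> < pi" shows "1 + cos \<theta> > 0"
proof -
  have "sin \<theta> > 0" using assms sin_gt_zero by blast
  then have "(cos \<theta>)^2 < 1" using sin_cos_squared_add[of \<theta>] by (simp add: power2_eq_square) (smt (verit) mult_pos_pos)
  then have "\<bar>cos \<theta>\<bar> < 1" by (simp add: abs_square_less_1)
  then show ?thesis by linarith
qed

lemma Z_fn:
  assumes th: "0 < \<theta>" "\<theta> < pi" and z: "\<phi> \<in> Zset \<theta> N" and nz: "sin ((real N + 1) * \<phi>) \<noteq> 0"
  shows "fn N \<phi> = (sin \<theta>)^2 / (1 + cos \<theta>)^2"
proof -
  have a: "(1 + cos \<theta>)^2 \<noteq> 0" using a_pos[OF th] by simp
  have "(1 + cos \<theta>)^2 * sin ((real N - 1) * \<phi>) = (sin \<theta>)^2 * sin ((real N + 1) * \<phi>)"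
    using z unfolding Zset_def by simp
  then show ?thesis unfolding fn_def using a nz by (simp add: field_simps)
qed

lemma Ik_inj:
  assumes n: "n \<ge> 1" and k: "k \<le> 2*n" "k \<noteq> n"
    and x: "x \<in> Iint (2*n) k" and y: "y \<in> Iint (2*n) k" and xy: "x < y"
  shows "fn (2*n) x \<noteq> fn (2*n) y"
proof -
  have N: "2*n \<ge> 2" using n by simp
  have p: "2 * real n + 1 > 0" by simp
  have n1: "real n \<ge> 1" using n by simp
  show ?thesis
  proof (cases "k < n")
    case True
    then have kn: "real k + 1 \<le> real n" by linarith
    have "0 \<le> pi * (2*real n - 2*real k - 1)" using kn by (intro mult_nonneg_nonneg) auto
    then have kn2: "pi + pi*(real k*2) \<le> pi*(real n*2)" by (simp add: algebra_simps)
    have "fn (2*n) x < fn (2*n) y" using x y xy unfolding Iint_def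
        by (intro region_inc[OF N, of k "real k / (real (2*n) + 1) * pi" "(real k + 1) / (real (2*n) + 1) * pi"])
           (use p n1 kn kn2 pi_gt_zero in \<open>auto simp: field_simps\<close>)
    then show ?thesis by simp
  next
    case False
    then have kn: "real k \<ge> real n + 1" "real k \<le> 2 * real n" using k by linarith+
    have "0 \<le> pi * (2*real k - 2*real n - 1)" using kn by (intro mult_nonneg_nonneg) auto
    then have kn2: "pi + pi*(real n*2) \<le> pi*(real k*2)" by (simp add: algebra_simps)
    have "0 \<le> pi * (2*real n - real k)" using kn by (intro mult_nonneg_nonneg) auto
    then have kn3: "pi*(real k) \<le> pi*(real n*2)" by (simp add: algebra_simps)
    have "fn (2*n) x > fn (2*n) y" using x y xy unfolding Iint_def
        by (intro region_dec[OF N, of k "real k / (real (2*n) + 1) * pi" "(real k + 1) / (real (2*n) + 1) * pi"])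
           (use p n1 kn kn2 kn3 pi_gt_zero in \<open>auto simp: field_simps\<close>)
    then show ?thesis by simp
  qed
qed

lemma Iint_nz:
  assumes "x \<in> Iint N k"
  shows "sin ((real N + 1) * x) \<noteq> 0"
proof (rule sin_nz_region[of k])
  show "real k * pi / (real N + 1) < x" "x < (real k + 1) * pi / (real N + 1)" using assms unfolding Iint_def by auto
qed

lemma ZI_atmost1:
  assumes th: "0 < \<theta>" "\<theta> < pi" and n: "n \<ge> 1" and k: "k \<le> 2*n" "k \<noteq> n"
  shows "finite (Zset \<theta> (2*n) \<inter> Iint (2*n) k) \<and> card (Zset \<theta> (2*n) \<inter> Iint (2*n) k) \<le> 1"
proof (rule atmost1)
  fix x y assume x: "x \<in> Zset \<theta> (2*n) \<inter> Iint (2*n) k" and y: "y \<in> Zset \<theta> (2*n) \<inter> Iint (2*n) k" and xy: "x < y"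
  have nx: "sin ((real (2*n) + 1) * x) \<noteq> 0" using Iint_nz x by blast
  have ny: "sin ((real (2*n) + 1) * y) \<noteq> 0" using Iint_nz y by blast
  have "fn (2*n) x = fn (2*n) y"
    using Z_fn[OF th _ nx] Z_fn[OF th _ ny] x y by auto
  then show False using Ik_inj[OF n k, of x y] x y xy by auto
qed


lemma hval:
  fixes m n :: nat and \<theta> :: real
  defines "D \<equiv> real (2*n) + 1"
  shows "(1 + cos \<theta>)^2 * sin ((real (2*n) - 1) * (real m / D * pi)) - (sin \<theta>)^2 * sin ((real (2*n) + 1) * (real m / D * pi))
     = - ((1 + cos \<theta>)^2 * (-1)^m * sin (2 * real m * pi / D))"
proof -
  have D: "D > 0" unfolding D_def by simp
  have e1: "(real (2*n) + 1) * (real m / D * pi) = real m * pi" using D unfolding D_def by (simp add: field_simps)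
  have e2: "(real (2*n) - 1) * (real m / D * pi) = real m * pi - 2 * real m * pi / D" using D unfolding D_def by (simp add: field_simps)
  show ?thesis unfolding e1 e2 sin_diff by simp
qed

lemma sin_two_pos:
  assumes "0 < x" "y < pi" "x \<le> y" shows "sin x * sin y > 0"
  using sin_gt_zero[of x] sin_gt_zero[of y] assms by simp

lemma sin_two_neg:
  assumes "pi < x" "y < 2*pi" "x \<le> y" shows "sin x * sin y > 0"
proof -
  have "sin x < 0" "sin y < 0" using sin_lt_zero assms by auto
  then show ?thesis by (simp add: mult_neg_neg)
qed

lemma ZI_exists:
  assumes th: "0 < \<theta>" "\<theta> < pi" and n: "n \<ge> 1" and k: "1 \<le> k" "k \<le> 2*n - 1" "k \<noteq> n"
  shows "\<exists>x. x \<in> Zset \<theta> (2*n) \<inter> Iint (2*n) k"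
proof -
  define D where "D = real (2*n) + 1"
  have D: "D > 0" unfolding D_def by simp
  define h where "h x = (1 + cos \<theta>)^2 * sin ((real (2*n) - 1) * x) - (sin \<theta>)^2 * sin ((real (2*n) + 1) * x)" for x
  define a where "a = real k / D * pi"
  define b where "b = (real k + 1) / D * pi"
  have ab: "a < b" unfolding a_def b_def using D by (simp add: divide_strict_right_mono)
  define \<sigma>1 where "\<sigma>1 = sin (2 * real k * pi / D)"
  define \<sigma>2 where "\<sigma>2 = sin (2 * (real k + 1) * pi / D)"
  have ha: "h a = - ((1 + cos \<theta>)^2 * (-1)^k * \<sigma>1)"
    unfolding h_def a_def \<sigma>1_def D_def by (rule hval)
  have hb: "h b = (1 + cos \<theta>)^2 * (-1)^k * \<sigma>2"
    using hval[where m="k+1" and n=n and \<theta>=\<theta>] unfolding h_def b_def \<sigma>2_def D_def by (simp add: add.commute)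
  have s12: "\<sigma>1 * \<sigma>2 > 0"
  proof (cases "k < n")
    case True
    have "2 * (real k + 1) < D" using True unfolding D_def by simp
    then have "2 * (real k + 1) * pi < pi * D" using mult_strict_right_mono[OF _ pi_gt_zero] by (simp add: mult.commute)
    then have "2 * (real k + 1) * pi / D < pi" by (simp add: pos_divide_less_eq[OF D])
    moreover have "0 < 2 * real k * pi / D" using D k by simp
    moreover have "2 * real k * pi / D \<le> 2 * (real k + 1) * pi / D" using D by (simp add: divide_right_mono)
    ultimately show ?thesis unfolding \<sigma>1_def \<sigma>2_def by (intro sin_two_pos)
  next
    case False
    then have "D < 2 * real k" unfolding D_def using k by simp
    then have "pi * D < 2 * real k * pi" using mult_strict_right_mono[OF _ pi_gt_zero] by (simp add: mult.commute)
    then have "pi < 2 * real k * pi / D" by (simp add: pos_less_divide_eq[OF D])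
    moreover have "real k + 1 < D" unfolding D_def using k by linarith
    then have "2 * (real k + 1) * pi < 2 * pi * D" using mult_strict_right_mono[OF _ pi_gt_zero] by (simp add: mult.commute)
    then have "2 * (real k + 1) * pi / D < 2 * pi" by (simp add: pos_divide_less_eq[OF D])
    moreover have "2 * real k * pi / D \<le> 2 * (real k + 1) * pi / D" using D by (simp add: divide_right_mono)
    ultimately show ?thesis unfolding \<sigma>1_def \<sigma>2_def by (intro sin_two_neg)
  qed
  have apos: "(1 + cos \<theta>)^2 > 0" using a_pos[OF th] by simp
  have prod: "h a * h b < 0"
  proof -
    have "h a * h b = - (((1 + cos \<theta>)^2)^2 * ((-1)^k)^2 * (\<sigma>1 * \<sigma>2))" unfolding ha hb by (simp add: algebra_simps power2_eq_square)
    also have "((-1::real)^k)^2 = 1" by (simp add: power_mult[symmetric] mult.commute[of k] power_mult)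
    finally show ?thesis using apos s12 by simp
  qed
  have cont: "\<forall>x. a \<le> x \<and> x \<le> b \<longrightarrow> isCont h x" unfolding h_def by (auto intro!: continuous_intros)
  obtain x where x: "a \<le> x" "x \<le> b" "h x = 0"
  proof (cases "h a < 0")
    case True
    then have "h b > 0" using prod by (simp add: mult_less_0_iff)
    then show ?thesis using IVT[of h a 0 b] True ab cont that by auto
  next
    case False
    then have "h a > 0" "h b < 0" using prod by (auto simp: mult_less_0_iff)
    then show ?thesis using IVT2[of h b 0 a] ab cont that by auto
  qed
  have "x \<noteq> a" "x \<noteq> b" using x prod by auto
  then have "x \<in> Iint (2*n) k" using x unfolding Iint_def a_def b_def D_def by auto
  moreover have "x \<in> Zset \<theta> (2*n)" using x(3) unfolding h_def Zset_def by simp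
  ultimately show ?thesis by blast
qed

lemma ZI_one:
  assumes th: "0 < \<theta>" "\<theta> < pi" and n: "n \<ge> 1" and k: "1 \<le> k" "k \<le> 2*n - 1" "k \<noteq> n"
  shows "card (Zset \<theta> (2*n) \<inter> Iint (2*n) k) = 1"
proof -
  obtain x where x: "x \<in> Zset \<theta> (2*n) \<inter> Iint (2*n) k" using ZI_exists[OF assms] by blast
  have f: "finite (Zset \<theta> (2*n) \<inter> Iint (2*n) k)" "card (Zset \<theta> (2*n) \<inter> Iint (2*n) k) \<le> 1"
    using ZI_atmost1[OF th n, of k] k by auto
  have "card (Zset \<theta> (2*n) \<inter> Iint (2*n) k) \<noteq> 0" using f(1) x by auto
  then show ?thesis using f(2) by linarith
qed

lemma sin_sign:
  fixes m :: nat
  assumes "real m * pi < z" "z < (real m + 1) * pi"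
  shows "(-1)^m * sin z > 0"
proof -
  have "sin z = sin ((z - real m * pi) + real m * pi)" by simp
  also have "\<dots> = sin (z - real m * pi) * (-1)^m" unfolding sin_add by simp
  finally have "(-1)^m * sin z = sin (z - real m * pi)" by simp
  also have "\<dots> > 0" using assms by (intro sin_gt_zero) (auto simp: algebra_simps)
  finally show ?thesis .
qed

lemma ZI_mid:
  assumes th: "0 < \<theta>" "\<theta> < pi" and n: "n \<ge> 1"
  shows "Zset \<theta> (2*n) \<inter> Iint (2*n) n = {}"
proof (rule ccontr)
  assume "Zset \<theta> (2*n) \<inter> Iint (2*n) n \<noteq> {}"
  then obtain x where z: "x \<in> Zset \<theta> (2*n)" and x: "x \<in> Iint (2*n) n" by blast
  define D where "D = 2 * real n + 1"
  have D: "D > 0" unfolding D_def by simp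
  have x1: "real n / D * pi < x" "x < (real n + 1) / D * pi" using x unfolding Iint_def D_def by auto
  have s1: "(-1)^n * sin ((real (2*n) + 1) * x) > 0"
  proof (rule sin_sign)
    show "real n * pi < (real (2*n) + 1) * x" using x1(1) D unfolding D_def by (simp add: field_simps)
    show "(real (2*n) + 1) * x < (real n + 1) * pi" using x1(2) D unfolding D_def by (simp add: field_simps)
  qed
  have c: "2 * real n - 1 > 0" using n by simp
  have s2: "(-1)^(n-1) * sin ((real (2*n) - 1) * x) > 0"
  proof (rule sin_sign)
    have "(2 * real n - 1) * (real n / D * pi) < (2 * real n - 1) * x" using mult_strict_left_mono[OF x1(1) c] .
    moreover have "real (n-1) * pi < (2 * real n - 1) * (real n / D * pi)"
    proof -
      have "(2 * real n - 1) * (real n / D * pi) - real (n-1) * pi = pi / D"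
        using n D unfolding D_def by (simp add: field_simps of_nat_diff; simp add: algebra_simps)
      moreover have "pi / D > 0" using D by simp
      ultimately show ?thesis by linarith
    qed
    ultimately show "real (n-1) * pi < (real (2*n) - 1) * x" by simp
    have "(2 * real n - 1) * x < (2 * real n - 1) * ((real n + 1) / D * pi)" using mult_strict_left_mono[OF x1(2) c] .
    moreover have "(2 * real n - 1) * ((real n + 1) / D * pi) < (real (n-1) + 1) * pi"
    proof -
      have "(real (n-1) + 1) * pi - (2 * real n - 1) * ((real n + 1) / D * pi) = pi / D"
        using n D unfolding D_def by (simp add: field_simps of_nat_diff; simp add: algebra_simps)
      moreover have "pi / D > 0" using D by simp
      ultimately show ?thesis by linarith
    qed
    ultimately show "(real (2*n) - 1) * x < (real (n-1) + 1) * pi" by simp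
  qed
  have e: "(1 + cos \<theta>)^2 * sin ((real (2*n) - 1) * x) = (sin \<theta>)^2 * sin ((real (2*n) + 1) * x)"
    using z unfolding Zset_def by simp
  have sg: "((-1::real)^(n-1)) = - ((-1)^n)"
  proof -
    obtain m where "n = Suc m" using n by (cases n) auto
    then show ?thesis by simp
  qed
  have apos: "(1 + cos \<theta>)^2 > 0" using a_pos[OF th] by simp
  have spos: "(sin \<theta>)^2 > 0" using sin_gt_zero[OF th] by simp
  have t2: "(-1)^n * sin ((real (2*n) - 1) * x) < 0" using s2 unfolding sg by simp
  have e1: "(-1)^n * ((1 + cos \<theta>)^2 * sin ((real (2*n) - 1) * x)) = (1 + cos \<theta>)^2 * ((-1)^n * sin ((real (2*n) - 1) * x))"
    by (simp add: ac_simps)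
  have "(-1)^n * ((1 + cos \<theta>)^2 * sin ((real (2*n) - 1) * x)) < 0"
    unfolding e1 using mult_pos_neg[OF apos t2] .
  moreover have e2: "(-1)^n * ((sin \<theta>)^2 * sin ((real (2*n) + 1) * x)) = (sin \<theta>)^2 * ((-1)^n * sin ((real (2*n) + 1) * x))"
    by (simp add: ac_simps)
  have "(-1)^n * ((sin \<theta>)^2 * sin ((real (2*n) + 1) * x)) > 0"
    unfolding e2 using mult_pos_pos[OF spos s1] .
  ultimately show False using e by simp
qed

lemma Z_ends: "{0, pi} \<subseteq> Zset \<theta> (2*n)"
proof -
  have "sin ((real (2*n) - 1) * pi) = 0"
  proof (cases n)
    case 0 then show ?thesis by simp
  next
    case (Suc m)
    then have "real (2*n) - 1 = real (2*n - 1)" by simp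
    then show ?thesis by (metis sin_npi)
  qed
  moreover have "sin ((real (2*n) + 1) * pi) = 0" by (metis of_nat_Suc add.commute sin_npi)
  ultimately show ?thesis unfolding Zset_def by simp
qed


lemma part_v:
  assumes n: "n \<ge> 1"
  shows "Zset (pi/2) (2*n) \<inter> {0..pi} \<subseteq> {0, pi} \<union> {(2 * real j - 1) / (4 * real n) * pi | j. j \<in> {1..2*n}}"
proof
  fix \<phi> assume "\<phi> \<in> Zset (pi/2) (2*n) \<inter> {0..pi}"
  then have z: "sin ((real (2*n) - 1) * \<phi>) = sin ((real (2*n) + 1) * \<phi>)" and r: "0 \<le> \<phi>" "\<phi> \<le> pi"
    unfolding Zset_def by auto
  have id: "sin ((real (2*n) + 1) * \<phi>) - sin ((real (2*n) - 1) * \<phi>) = 2 * cos (real (2*n) * \<phi>) * sin \<phi>"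
  proof -
    have a: "(real (2*n) + 1) * \<phi> = real (2*n) * \<phi> + \<phi>" "(real (2*n) - 1) * \<phi> = real (2*n) * \<phi> - \<phi>"
      by (simp_all add: algebra_simps)
    show ?thesis unfolding a sin_add sin_diff by simp
  qed
  then have "cos (real (2*n) * \<phi>) = 0 \<or> sin \<phi> = 0" using z by simp
  then show "\<phi> \<in> {0, pi} \<union> {(2 * real j - 1) / (4 * real n) * pi | j. j \<in> {1..2*n}}"
  proof
    assume "sin \<phi> = 0"
    then have "\<not> (0 < \<phi> \<and> \<phi> < pi)" using sin_gt_zero by force
    then show ?thesis using r by auto
  next
    assume "cos (real (2*n) * \<phi>) = 0"
    then obtain i :: int where i: "odd i" "real (2*n) * \<phi> = of_int i * (pi/2)" using cos_zero_iff_int by blast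
    have np: "real n > 0" using n by simp
    have phi: "\<phi> = of_int i / (4 * real n) * pi" using i(2) np by (simp add: field_simps)
    have ie: "of_int i = \<phi> * (4*real n) / pi" using phi np by (simp add: field_simps)
    have "0 \<le> \<phi> * (4*real n) / pi" using r(1) np by simp
    then have i0: "0 \<le> i" using ie by simp
    have "\<phi> * (4*real n) \<le> pi * (4*real n)" by (rule mult_right_mono[OF r(2)]) simp
    then have "\<phi> * (4*real n) / pi \<le> 4*real n" by (simp add: pos_divide_le_eq[OF pi_gt_zero] mult.commute)
    then have "of_int i \<le> 4 * real n" using ie by simp
    then have i4: "i \<le> 4 * int n" by linarith
    obtain j :: int where j: "i = 2 * j + 1" using i(1) by (meson oddE)
    define jj where "jj = nat (j + 1)"
    have jj: "jj \<in> {1..2*n}" using i0 i4 j unfolding jj_def by auto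
    have "of_int i = 2 * real jj - 1" using j i0 unfolding jj_def by simp
    then have "\<phi> = (2 * real jj - 1) / (4 * real n) * pi" using phi by simp
    then show ?thesis using jj by blast
  qed
qed

lemma spec_sub:
  assumes th: "0 < \<theta>" "\<theta> < pi" and n: "n \<ge> 1" and k: "k \<le> 2*n"
  shows "spec (Mmat \<theta> n) \<inter> cosimg \<theta> (Iint (2*n) k) \<subseteq> (\<lambda>\<phi>. 2 * sin \<theta> * cos \<phi>) ` (Zset \<theta> (2*n) \<inter> Iint (2*n) k)"
proof
  fix lam assume "lam \<in> spec (Mmat \<theta> n) \<inter> cosimg \<theta> (Iint (2*n) k)"
  then obtain v \<phi> where ev: "eigenvector (Mmat \<theta> n) v lam" and phi: "\<phi> \<in> Iint (2*n) k" and lam: "lam = 2 * sin \<theta> * cos \<phi>"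
    unfolding spec_def cosimg_def eigenvalue_def by auto
  have D: "real (2*n) + 1 > 0" by simp
  have "0 \<le> real k / (real (2*n) + 1) * pi" by simp
  moreover have "(real k + 1) / (real (2*n) + 1) * pi \<le> 1 * pi"
    using k D by (intro mult_right_mono) (auto simp: divide_le_eq)
  moreover have "real k / (real (2*n) + 1) * pi < \<phi>" "\<phi> < (real k + 1) / (real (2*n) + 1) * pi"
    using phi unfolding Iint_def by auto
  ultimately have "0 < \<phi>" "\<phi> < pi" by linarith+
  then have "sin \<phi> \<noteq> 0" using sin_gt_zero by force
  then have "\<phi> \<in> Zset \<theta> (2*n)" using eig_rel[OF n th ev lam] unfolding Zset_def by simp
  then show "lam \<in> (\<lambda>\<phi>. 2 * sin \<theta> * cos \<phi>) ` (Zset \<theta> (2*n) \<inter> Iint (2*n) k)" using phi lam by blast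
qed

lemma card_sub_image:
  assumes "B \<subseteq> f ` A" "finite A"
  shows "finite B \<and> card B \<le> card A"
  using assms by (meson card_image_le card_mono finite_imageI le_trans finite_subset)

lemma part_vi:
  assumes th: "0 < \<theta>" "\<theta> < pi" and n: "n \<ge> 1"
  shows "finite (spec (Mmat \<theta> n) \<inter> cosimg \<theta> (Iint (2*n) 0)) \<and>
       card (spec (Mmat \<theta> n) \<inter> cosimg \<theta> (Iint (2*n) 0)) \<le> 3 \<and>
       finite (spec (Mmat \<theta> n) \<inter> cosimg \<theta> (Iint (2*n) (2*n))) \<and>
       card (spec (Mmat \<theta> n) \<inter> cosimg \<theta> (Iint (2*n) (2*n))) \<le> 3 \<and>
       spec (Mmat \<theta> n) \<inter> cosimg \<theta> (Iint (2*n) n) = {} \<and>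
       (\<forall>k::nat. 1 \<le> k \<and> k \<le> 2*n - 1 \<and> k \<noteq> n \<longrightarrow>
          finite (spec (Mmat \<theta> n) \<inter> cosimg \<theta> (Iint (2*n) k)) \<and>
          card (spec (Mmat \<theta> n) \<inter> cosimg \<theta> (Iint (2*n) k)) \<le> 1)"
proof -
  have gen: "finite (spec (Mmat \<theta> n) \<inter> cosimg \<theta> (Iint (2*n) k)) \<and> card (spec (Mmat \<theta> n) \<inter> cosimg \<theta> (Iint (2*n) k)) \<le> 1"
    if k: "k \<le> 2*n" "k \<noteq> n" for k
  proof -
    have f: "finite (Zset \<theta> (2*n) \<inter> Iint (2*n) k)" "card (Zset \<theta> (2*n) \<inter> Iint (2*n) k) \<le> 1"
      using ZI_atmost1[OF th n k] by auto
    show ?thesis using card_sub_image[OF spec_sub[OF th n k(1)] f(1)] f(2) by linarith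
  qed
  have g0: "finite (spec (Mmat \<theta> n) \<inter> cosimg \<theta> (Iint (2*n) 0)) \<and> card (spec (Mmat \<theta> n) \<inter> cosimg \<theta> (Iint (2*n) 0)) \<le> 1"
    using gen[of 0] n by simp
  have g1: "finite (spec (Mmat \<theta> n) \<inter> cosimg \<theta> (Iint (2*n) (2*n))) \<and> card (spec (Mmat \<theta> n) \<inter> cosimg \<theta> (Iint (2*n) (2*n))) \<le> 1"
    using gen[of "2*n"] n by simp
  have "spec (Mmat \<theta> n) \<inter> cosimg \<theta> (Iint (2*n) n) \<subseteq> {}"
    using spec_sub[OF th n, of n] ZI_mid[OF th n] by simp
  then show ?thesis using g0 g1 gen by auto
qed

lemma abs_cancel_aux:
  fixes c x m :: real
  assumes "\<bar>c\<bar> * \<bar>x\<bar> \<le> m * \<bar>x\<bar>" "x \<noteq> 0"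
  shows "\<bar>c\<bar> \<le> m"
  using assms by (simp add: mult_le_cancel_right)

lemma gersh:
  assumes n: "n \<ge> 1" and ev: "eigenvector (Mmat (pi/2) n) v lam"
  shows "\<bar>lam\<bar> \<le> 2"
proof -
  define N where "N = 2*n"
  have N2: "N \<ge> 2" using n N_def by simp
  have dimM: "dim_row (Mmat (pi/2) n) = N" unfolding Mmat_def N_def by simp
  have vc: "v \<in> carrier_vec N" and v0: "v \<noteq> 0\<^sub>v N" and eq: "Mmat (pi/2) n *\<^sub>v v = lam \<cdot>\<^sub>v v"
    using ev unfolding eigenvector_def dimM by auto
  have row: "(Mmat (pi/2) n *\<^sub>v v) $ i = lam * v $ i" if "i < N" for i
    using eq that vc by simp
  define M where "M = Max ((\<lambda>j. \<bar>v$j\<bar>) ` {..<N})"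
  have "M \<in> (\<lambda>j. \<bar>v$j\<bar>) ` {..<N}" unfolding M_def using N2 by (intro Max_in) (auto simp: lessThan_empty_iff)
  then obtain i where i: "i < N" "\<bar>v$i\<bar> = M" by auto
  have le: "\<bar>v$j\<bar> \<le> \<bar>v$i\<bar>" if "j < N" for j unfolding i(2) M_def using that by (intro Max_ge) auto
  have vi: "v$i \<noteq> 0"
  proof
    assume "v$i = 0"
    then have "v = 0\<^sub>v N" using le vc by (intro eq_vecI) auto
    then show False using v0 by simp
  qed
  have R0: "(Mmat (pi/2) n *\<^sub>v v) $ i =
     (if i = 0 then 1 + cos (pi/2) else if i = 2*n - 1 then - (1 + cos (pi/2)) else 0) * v $ i
     + (if 0 < i then sin (pi/2) * v $ (i-1) else 0)
     + (if i + 1 < 2*n then sin (pi/2) * v $ (i+1) else 0)"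
    by (rule Mmat_row[OF vc[unfolded N_def] i(1)[unfolded N_def]])
  have R: "(if i = 0 then 1 + cos (pi/2) else if i = 2*n - 1 then - (1 + cos (pi/2)) else 0) * v $ i
     + (if 0 < i then sin (pi/2) * v $ (i-1) else 0)
     + (if i + 1 < 2*n then sin (pi/2) * v $ (i+1) else 0) = lam * v $ i"
    using R0[symmetric] row[OF i(1)] by (rule trans)
  show ?thesis
  proof (cases "i = 0")
    case True
    then have "v$1 = (lam - 1) * v$0" using R N2 unfolding N_def by (simp add: algebra_simps)
    then have "\<bar>lam - 1\<bar> * \<bar>v$0\<bar> \<le> 1 * \<bar>v$0\<bar>" using le[of 1] N2 True by (simp add: abs_mult)
    then have "\<bar>lam - 1\<bar> \<le> 1" using abs_cancel_aux vi True by blast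
    then show ?thesis by linarith
  next
    case False
    show ?thesis
    proof (cases "i = N - 1")
      case True
      then have "v$(i-1) = (lam + 1) * v$i" using R N2 False unfolding N_def by (simp add: algebra_simps)
      then have "\<bar>lam + 1\<bar> * \<bar>v$i\<bar> \<le> 1 * \<bar>v$i\<bar>" using le[of "i-1"] i by (simp add: abs_mult)
      then have "\<bar>lam + 1\<bar> \<le> 1" using abs_cancel_aux vi by blast
      then show ?thesis by linarith
    next
      case F2: False
      then have "i + 1 < N" using i by linarith
      then have "v$(i-1) + v$(i+1) = lam * v$i" using R F2 False unfolding N_def by simp
      then have "\<bar>lam\<bar> * \<bar>v$i\<bar> \<le> \<bar>v$(i-1)\<bar> + \<bar>v$(i+1)\<bar>" by (metis abs_mult abs_triangle_ineq)
      also have "\<dots> \<le> 2 * \<bar>v$i\<bar>"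
      proof -
        have "i - 1 < N" using i by simp
        then show ?thesis using le[of "i-1"] le[of "i+1"] \<open>i + 1 < N\<close> by linarith
      qed
      finally show ?thesis using abs_cancel_aux vi by blast
    qed
  qed
qed

lemma part_vii:
  assumes n: "n \<ge> 1"
  shows "spec (Mmat (pi/2) n) \<subseteq> {-2, 2} \<union> {2 * cos ((2 * real k - 1) / (4 * real n) * pi) | k. k \<in> {1..2*n}}"
proof
  fix lam assume "lam \<in> spec (Mmat (pi/2) n)"
  then obtain v where ev: "eigenvector (Mmat (pi/2) n) v lam" unfolding spec_def eigenvalue_def by auto
  have b: "\<bar>lam\<bar> \<le> 2" using gersh[OF n ev] .
  show "lam \<in> {-2, 2} \<union> {2 * cos ((2 * real k - 1) / (4 * real n) * pi) | k. k \<in> {1..2*n}}"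
  proof (cases "\<bar>lam\<bar> = 2")
    case True then show ?thesis by auto
  next
    case False
    then have l: "-1 < lam/2" "lam/2 < 1" using b by auto
    define \<phi> where "\<phi> = arccos (lam/2)"
    have p: "0 < \<phi>" "\<phi> < pi" unfolding \<phi>_def using arccos_lt_bounded[OF l] by auto
    have c: "cos \<phi> = lam/2" unfolding \<phi>_def using l by (intro cos_arccos) auto
    have lam: "lam = 2 * sin (pi/2) * cos \<phi>" using c by simp
    have th: "0 < pi/2" "pi/2 < pi" by auto
    have "sin \<phi> \<noteq> 0" using sin_gt_zero[OF p] by simp
    then have "\<phi> \<in> Zset (pi/2) (2*n)" using eig_rel[OF n th ev lam] unfolding Zset_def by simp
    then have "\<phi> \<in> {0, pi} \<union> {(2 * real j - 1) / (4 * real n) * pi | j. j \<in> {1..2*n}}"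
      using part_v[OF n] p by auto
    then obtain j where j: "j \<in> {1..2*n}" "\<phi> = (2 * real j - 1) / (4 * real n) * pi" using p by auto
    then have "lam = 2 * cos ((2 * real j - 1) / (4 * real n) * pi)" using c by simp
    then show ?thesis using j by blast
  qed
qed


definition FF :: "real \<Rightarrow> real \<Rightarrow> real \<Rightarrow> real" where
  "FF c a b = a^2 - 2*c*a*b + b^2"

lemma FF_inv: "FF c b (2*c*b - a) = FF c a b"
  unfolding FF_def by (simp add: algebra_simps power2_eq_square)

lemma FF_bounds:
  assumes "\<bar>c\<bar> < 1"
  shows "(1 - \<bar>c\<bar>) * (a^2 + b^2) \<le> FF c a b" "FF c a b \<le> (1 + \<bar>c\<bar>) * (a^2 + b^2)"
proof -
  have "0 \<le> (\<bar>a\<bar> - \<bar>b\<bar>)^2" by simp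
  also have "\<dots> = a^2 + b^2 - 2*\<bar>a*b\<bar>" by (simp add: power2_diff abs_mult)
  finally have ab: "2 * \<bar>a*b\<bar> \<le> a^2 + b^2" by simp
  have "\<bar>2*c*a*b\<bar> = \<bar>c\<bar> * (2*\<bar>a*b\<bar>)" by (simp add: abs_mult)
  also have "\<dots> \<le> \<bar>c\<bar> * (a^2 + b^2)" by (rule mult_left_mono[OF ab]) simp
  finally have h: "\<bar>2*c*a*b\<bar> \<le> \<bar>c\<bar> * (a^2 + b^2)" .
  show "(1 - \<bar>c\<bar>) * (a^2 + b^2) \<le> FF c a b" unfolding FF_def using h by (simp add: algebra_simps abs_le_iff)
  show "FF c a b \<le> (1 + \<bar>c\<bar>) * (a^2 + b^2)" unfolding FF_def using h by (simp add: algebra_simps abs_le_iff)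
qed

lemma core_viii:
  fixes u :: "complex vec"
  assumes n: "n \<ge> 1" and s: "sin \<theta> > 0"
    and ev: "eigenvector (map_mat complex_of_real (Mmat \<theta> n)) u (complex_of_real lam)"
    and c: "\<bar>lam / (2 * sin \<theta>)\<bar> \<le> \<rho>" and \<rho>: "\<rho> < 1"
    and nrm: "(\<Sum>i<2*n. (cmod (u $ i))^2) = 1"
  shows "(cmod (u $ (2*n - 1)))^2 \<le> 4 / ((2 * real n - 1) * (1 - \<rho>))"
proof -
  define N where "N = 2*n"
  have N2: "N \<ge> 2" using n N_def by simp
  define c where "c = lam / (2 * sin \<theta>)"
  have c1: "\<bar>c\<bar> < 1" using c \<rho> unfolding c_def by simp
  have dimM: "dim_row (map_mat complex_of_real (Mmat \<theta> n)) = N" unfolding Mmat_def N_def by simp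
  have vc: "u \<in> carrier_vec N" and eq: "map_mat complex_of_real (Mmat \<theta> n) *\<^sub>v u = complex_of_real lam \<cdot>\<^sub>v u"
    using ev unfolding eigenvector_def dimM by auto
  define p where "p j = Re (u $ j)" for j
  define q where "q j = Im (u $ j)" for j
  have rowc: "complex_of_real (sin \<theta>) * u $ (j-1) + complex_of_real (sin \<theta>) * u $ (j+1) = complex_of_real lam * u $ j"
    if j: "0 < j" "j + 1 < N" for j
  proof -
    have "j \<noteq> 2*n - 1" using j N_def by simp
    moreover have "(map_mat complex_of_real (Mmat \<theta> n) *\<^sub>v u) $ j = complex_of_real lam * u $ j"
      using eq j vc by simp
    ultimately show ?thesis using Mmatc_row[OF vc[unfolded N_def], of j \<theta>] j unfolding N_def by simp
  qed
  have recp: "p (j+2) = 2*c*p (j+1) - p j" "q (j+2) = 2*c*q (j+1) - q j" if j: "j + 2 < N" for j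
  proof -
    have r: "complex_of_real (sin \<theta>) * u $ j + complex_of_real (sin \<theta>) * u $ (j+2) = complex_of_real lam * u $ (j+1)"
      using rowc[of "j+1"] j by simp
    have rp: "sin \<theta> * p j + sin \<theta> * p (j+2) = lam * p (j+1)"
      using arg_cong[OF r, of Re] unfolding p_def by simp
    have rq: "sin \<theta> * q j + sin \<theta> * q (j+2) = lam * q (j+1)"
      using arg_cong[OF r, of Im] unfolding q_def by simp
    have l: "lam = 2 * c * sin \<theta>" unfolding c_def using s by simp
    have "sin \<theta> * p (j+2) = sin \<theta> * (2*c*p (j+1) - p j)" using rp unfolding l by (simp add: algebra_simps)
    then show "p (j+2) = 2*c*p (j+1) - p j" using s by simp
    have "sin \<theta> * q (j+2) = sin \<theta> * (2*c*q (j+1) - q j)" using rq unfolding l by (simp add: algebra_simps)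
    then show "q (j+2) = 2*c*q (j+1) - q j" using s by simp
  qed
  define Q where "Q j = FF c (p j) (p (j+1)) + FF c (q j) (q (j+1))" for j
  have Qc: "j + 1 < N \<longrightarrow> Q j = Q 0" for j
  proof (induction j)
    case 0 then show ?case by simp
  next
    case (Suc j)
    show ?case
    proof
      assume j: "Suc j + 1 < N"
      then have "Q (Suc j) = Q j" unfolding Q_def using recp[of j] FF_inv by (simp add: numeral_2_eq_2)
      then show "Q (Suc j) = Q 0" using Suc j by simp
    qed
  qed
  define g where "g j = (cmod (u $ j))^2" for j
  have g: "g j = (p j)^2 + (q j)^2" for j unfolding g_def p_def q_def by (simp add: cmod_power2)
  define T where "T = Q 0"
  have lowQ: "(1 - \<bar>c\<bar>) * (g j + g (j+1)) \<le> Q j" for j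
    using FF_bounds(1)[OF c1, of "p j" "p (j+1)"] FF_bounds(1)[OF c1, of "q j" "q (j+1)"] unfolding Q_def g
    by (simp add: algebra_simps)
  have upQ: "Q j \<le> (1 + \<bar>c\<bar>) * (g j + g (j+1))" for j
    using FF_bounds(2)[OF c1, of "p j" "p (j+1)"] FF_bounds(2)[OF c1, of "q j" "q (j+1)"] unfolding Q_def g
    by (simp add: algebra_simps)
  have gnn: "g j \<ge> 0" for j unfolding g_def by simp
  have Tlow: "T / 2 \<le> g j + g (j+1)" if "j + 1 < N" for j
  proof -
    have "T \<le> (1 + \<bar>c\<bar>) * (g j + g (j+1))" using upQ[of j] Qc[of j] that unfolding T_def by simp
    also have "\<dots> \<le> 2 * (g j + g (j+1))" using c1 gnn[of j] gnn[of "j+1"] by (intro mult_right_mono) auto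
    finally show ?thesis by simp
  qed
  have sum1: "(\<Sum>j<N-1. g j + g (j+1)) \<le> 2"
  proof -
    have "(\<Sum>j<N-1. g j + g (j+1)) = (\<Sum>j<N-1. g j) + (\<Sum>j<N-1. g (Suc j))" by (simp add: sum.distrib)
    also have "(\<Sum>j<N-1. g j) \<le> (\<Sum>j<N. g j)" using gnn by (intro sum_mono2) auto
    also have "(\<Sum>j<N-1. g (Suc j)) \<le> (\<Sum>j<N. g j)"
    proof -
      have "(\<Sum>j<N. g j) = g 0 + (\<Sum>j<N-1. g (Suc j))"
        using sum.lessThan_Suc_shift[of g "N-1"] N2 by simp
      then show ?thesis using gnn[of 0] by simp
    qed
    finally show ?thesis using nrm unfolding g_def N_def by simp
  qed
  have "(\<Sum>j<N-1. T / 2) \<le> (\<Sum>j<N-1. g j + g (j+1))" using Tlow by (intro sum_mono) auto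
  then have Tb: "real (N-1) * (T/2) \<le> 2" using sum1 by simp
  have Npos: "real (N-1) = 2 * real n - 1" using N2 unfolding N_def by simp
  have np: "2 * real n - 1 > 0" using n by simp
  have T4: "T \<le> 4 / (2 * real n - 1)" using Tb np unfolding Npos by (simp add: field_simps)
  have "(1 - \<bar>c\<bar>) * g (N-1) \<le> (1 - \<bar>c\<bar>) * (g (N-2) + g (N-2+1))"
    using c1 gnn[of "N-2"] N2 by (intro mult_left_mono) (auto simp: numeral_2_eq_2 Suc_diff_Suc)
  also have "\<dots> \<le> Q (N-2)" by (rule lowQ)
  also have "\<dots> = T" using Qc[of "N-2"] N2 unfolding T_def by simp
  finally have gl: "(1 - \<bar>c\<bar>) * g (N-1) \<le> T" .
  have "(1 - \<rho>) * g (N-1) \<le> (1 - \<bar>c\<bar>) * g (N-1)" using c unfolding c_def by (intro mult_right_mono) (auto simp: gnn)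
  then have "(1 - \<rho>) * g (N-1) \<le> 4 / (2 * real n - 1)" using gl T4 by linarith
  then have a1: "(1 - \<rho>) * g (N-1) * (2 * real n - 1) \<le> 4" using np by (simp add: pos_le_divide_eq)
  have XY: "(2 * real n - 1) * (1 - \<rho>) > 0" using np \<rho> by simp
  have "g (N-1) \<le> 4 / ((2 * real n - 1) * (1 - \<rho>))"
    by (subst pos_le_divide_eq[OF XY]) (use a1 in \<open>simp add: ac_simps\<close>)
  then show ?thesis unfolding g_def N_def .
qed


lemma part_viii:
  assumes th: "0 < \<theta>" "\<theta> < pi"
  shows "\<forall>\<epsilon> lam0 \<eta>. \<epsilon> > 0 \<and> - 2 * sin \<theta> < lam0 \<and> lam0 < 2 * sin \<theta> \<and> \<eta> > 0 \<and> \<bar>lam0\<bar> + \<eta> < 2 * sin \<theta> \<longrightarrow>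
      (\<exists>n0::nat. \<forall>n\<ge>n0. \<forall>(lam::real) (u::complex vec).
         eigenvalue (Mmat \<theta> n) lam \<and> lam0 - \<eta> < lam \<and> lam < lam0 + \<eta> \<and>
         eigenvector (map_mat complex_of_real (Mmat \<theta> n)) u (complex_of_real lam) \<and>
         (\<Sum>i<2*n. (cmod (u $ i))^2) = 1
         \<longrightarrow> cmod (u $ (2*n - 1)) < \<epsilon>)"
proof (intro allI impI)
  fix \<epsilon> lam0 \<eta> :: real
  assume A: "\<epsilon> > 0 \<and> - 2 * sin \<theta> < lam0 \<and> lam0 < 2 * sin \<theta> \<and> \<eta> > 0 \<and> \<bar>lam0\<bar> + \<eta> < 2 * sin \<theta>"
  have s: "sin \<theta> > 0" using th sin_gt_zero by blast
  define \<rho> where "\<rho> = (\<bar>lam0\<bar> + \<eta>) / (2 * sin \<theta>)"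
  have \<rho>1: "\<rho> < 1" unfolding \<rho>_def using A s by (simp add: divide_less_eq)
  have e2: "\<epsilon>^2 > 0" using A by simp
  define K where "K = 4 / ((1 - \<rho>) * \<epsilon>^2)"
  define n0 where "n0 = nat (ceiling K) + 1"
  show "\<exists>n0::nat. \<forall>n\<ge>n0. \<forall>(lam::real) (u::complex vec).
         eigenvalue (Mmat \<theta> n) lam \<and> lam0 - \<eta> < lam \<and> lam < lam0 + \<eta> \<and>
         eigenvector (map_mat complex_of_real (Mmat \<theta> n)) u (complex_of_real lam) \<and>
         (\<Sum>i<2*n. (cmod (u $ i))^2) = 1
         \<longrightarrow> cmod (u $ (2*n - 1)) < \<epsilon>"
  proof (intro exI[of _ n0] allI impI)
    fix n :: nat and lam :: real and u :: "complex vec"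
    assume n: "n0 \<le> n"
    assume B: "eigenvalue (Mmat \<theta> n) lam \<and> lam0 - \<eta> < lam \<and> lam < lam0 + \<eta> \<and>
         eigenvector (map_mat complex_of_real (Mmat \<theta> n)) u (complex_of_real lam) \<and>
         (\<Sum>i<2*n. (cmod (u $ i))^2) = 1"
    have n1: "n \<ge> 1" using n unfolding n0_def by simp
    have nK: "real n > K"
    proof -
      have "K \<le> real (nat (ceiling K))" by linarith
      then show ?thesis using n unfolding n0_def by linarith
    qed
    have "\<bar>lam\<bar> < \<bar>lam0\<bar> + \<eta>" using B by linarith
    then have c: "\<bar>lam / (2 * sin \<theta>)\<bar> \<le> \<rho>" unfolding \<rho>_def using s
      by (simp add: abs_divide divide_right_mono)
    have core: "(cmod (u $ (2*n - 1)))^2 \<le> 4 / ((2 * real n - 1) * (1 - \<rho>))"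
      using core_viii[OF n1 s _ c \<rho>1] B by blast
    have r1: "1 - \<rho> > 0" using \<rho>1 by simp
    have "K < 2 * real n - 1" using nK n1 by simp
    then have "4 < (2 * real n - 1) * ((1 - \<rho>) * \<epsilon>^2)"
      unfolding K_def using r1 e2 by (simp add: pos_divide_less_eq)
    then have "4 / ((2 * real n - 1) * (1 - \<rho>)) < \<epsilon>^2"
      using r1 n1 by (subst pos_divide_less_eq) (auto simp: ac_simps)
    then have "(cmod (u $ (2*n - 1)))^2 < \<epsilon>^2" using core by linarith
    moreover have ep: "0 \<le> \<epsilon>" using A by linarith
    ultimately show "cmod (u $ (2*n - 1)) < \<epsilon>" by (rule power2_less_imp_less)
  qed
qed


theorem mainTheorem1:
  fixes \<theta> :: real
  assumes "0 < \<theta>" and "\<theta> < pi"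
  shows
  \<comment> \<open>(i)\<close>
  "(\<forall>n::nat. n \<ge> 1 \<longrightarrow> (\<forall>\<phi>. 0 \<le> \<phi> \<and> \<phi> \<le> pi \<and> \<phi> \<in> fdom (2*n) \<longrightarrow>
       fn (2*n) \<phi> = fn (2*n) (pi - \<phi>) \<and> fn (2*n) \<phi> = fn (2*n) (pi + \<phi>)))
   \<and>
  \<comment> \<open>(ii)\<close>
   (\<exists>N. \<forall>n\<ge>N.
       monot_on {0 <..< pi / (2 * (2 * real n + 1))} (fn (2*n)) \<and>
       monot_on {pi - pi / (2 * (2 * real n + 1)) <..< pi} (fn (2*n)))
   \<and>
  \<comment> \<open>(iii)\<close>
   (\<exists>N. \<forall>n\<ge>N. \<forall>k::nat. 1 \<le> k \<and> k \<le> 2*n - 1 \<and> k \<noteq> n \<longrightarrow>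
       monot_on {pi / (2 * (2 * real n + 1)) ..< pi / (2 * real n + 1)} (fn (2*n)) \<and>
       monot_on (Iint (2*n) k) (fn (2*n)) \<and>
       monot_on {2 * real n * pi / (2 * real n + 1) <.. pi - pi / (2 * (2 * real n + 1))} (fn (2*n)))
   \<and>
  \<comment> \<open>(iv)\<close>
   (\<theta> \<noteq> pi / 2 \<longrightarrow> (\<exists>N. \<forall>n\<ge>N.
       finite (Zset \<theta> (2*n) \<inter> Iint (2*n) 0) \<and> card (Zset \<theta> (2*n) \<inter> Iint (2*n) 0) \<le> 3 \<and>
       finite (Zset \<theta> (2*n) \<inter> Iint (2*n) (2*n)) \<and> card (Zset \<theta> (2*n) \<inter> Iint (2*n) (2*n)) \<le> 3 \<and>
       Zset \<theta> (2*n) \<inter> Iint (2*n) n = {} \<and>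
       {0, pi} \<subseteq> Zset \<theta> (2*n) \<and>
       (\<forall>k::nat. 1 \<le> k \<and> k \<le> 2*n - 1 \<and> k \<noteq> n \<longrightarrow> card (Zset \<theta> (2*n) \<inter> Iint (2*n) k) = 1)))
   \<and>
  \<comment> \<open>(v)\<close>
   (\<theta> = pi / 2 \<longrightarrow> (\<forall>n::nat. n \<ge> 1 \<longrightarrow>
       Zset \<theta> (2*n) \<inter> {0..pi} \<subseteq>
         {0, pi} \<union> {(2 * real j - 1) / (4 * real n) * pi | j. j \<in> {1..2*n}}))
   \<and>
  \<comment> \<open>(vi)\<close>
   (\<theta> \<noteq> pi / 2 \<longrightarrow> (\<exists>N. \<forall>n\<ge>N.
       finite (spec (Mmat \<theta> n) \<inter> cosimg \<theta> (Iint (2*n) 0)) \<and>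
       card (spec (Mmat \<theta> n) \<inter> cosimg \<theta> (Iint (2*n) 0)) \<le> 3 \<and>
       finite (spec (Mmat \<theta> n) \<inter> cosimg \<theta> (Iint (2*n) (2*n))) \<and>
       card (spec (Mmat \<theta> n) \<inter> cosimg \<theta> (Iint (2*n) (2*n))) \<le> 3 \<and>
       spec (Mmat \<theta> n) \<inter> cosimg \<theta> (Iint (2*n) n) = {} \<and>
       (\<forall>k::nat. 1 \<le> k \<and> k \<le> 2*n - 1 \<and> k \<noteq> n \<longrightarrow>
          finite (spec (Mmat \<theta> n) \<inter> cosimg \<theta> (Iint (2*n) k)) \<and>
          card (spec (Mmat \<theta> n) \<inter> cosimg \<theta> (Iint (2*n) k)) \<le> 1)))
   \<and>
  \<comment> \<open>(vii)\<close>
   (\<theta> = pi / 2 \<longrightarrow> (\<forall>n::nat. n \<ge> 1 \<longrightarrow>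
       spec (Mmat \<theta> n) \<subseteq> {-2, 2} \<union> {2 * cos ((2 * real k - 1) / (4 * real n) * pi) | k. k \<in> {1..2*n}}))
   \<and>
  \<comment> \<open>(viii)\<close>
   (\<forall>\<epsilon> lam0 \<eta>. \<epsilon> > 0 \<and> - 2 * sin \<theta> < lam0 \<and> lam0 < 2 * sin \<theta> \<and> \<eta> > 0 \<and> \<bar>lam0\<bar> + \<eta> < 2 * sin \<theta> \<longrightarrow>
      (\<exists>n0::nat. \<forall>n\<ge>n0. \<forall>(lam::real) (u::complex vec).
         eigenvalue (Mmat \<theta> n) lam \<and> lam0 - \<eta> < lam \<and> lam < lam0 + \<eta> \<and>
         eigenvector (map_mat complex_of_real (Mmat \<theta> n)) u (complex_of_real lam) \<and>
         (\<Sum>i<2*n. (cmod (u $ i))^2) = 1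
         \<longrightarrow> cmod (u $ (2*n - 1)) < \<epsilon>))"
  proof -
  have i: "\<forall>n::nat. n \<ge> 1 \<longrightarrow> (\<forall>\<phi>. 0 \<le> \<phi> \<and> \<phi> \<le> pi \<and> \<phi> \<in> fdom (2*n) \<longrightarrow>
       fn (2*n) \<phi> = fn (2*n) (pi - \<phi>) \<and> fn (2*n) \<phi> = fn (2*n) (pi + \<phi>))"
    using part_i by blast
  have ii: "\<exists>N. \<forall>n\<ge>N.
       monot_on {0 <..< pi / (2 * (2 * real n + 1))} (fn (2*n)) \<and>
       monot_on {pi - pi / (2 * (2 * real n + 1)) <..< pi} (fn (2*n))"
    using part_ii by (intro exI[of _ 1]) auto
  have iii: "\<exists>N. \<forall>n\<ge>N. \<forall>k::nat. 1 \<le> k \<and> k \<le> 2*n - 1 \<and> k \<noteq> n \<longrightarrow>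
       monot_on {pi / (2 * (2 * real n + 1)) ..< pi / (2 * real n + 1)} (fn (2*n)) \<and>
       monot_on (Iint (2*n) k) (fn (2*n)) \<and>
       monot_on {2 * real n * pi / (2 * real n + 1) <.. pi - pi / (2 * (2 * real n + 1))} (fn (2*n))"
    using part_iii by (intro exI[of _ 1]) auto
  have iv: "\<exists>N. \<forall>n\<ge>N.
       finite (Zset \<theta> (2*n) \<inter> Iint (2*n) 0) \<and> card (Zset \<theta> (2*n) \<inter> Iint (2*n) 0) \<le> 3 \<and>
       finite (Zset \<theta> (2*n) \<inter> Iint (2*n) (2*n)) \<and> card (Zset \<theta> (2*n) \<inter> Iint (2*n) (2*n)) \<le> 3 \<and>
       Zset \<theta> (2*n) \<inter> Iint (2*n) n = {} \<and>
       {0, pi} \<subseteq> Zset \<theta> (2*n) \<and>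
       (\<forall>k::nat. 1 \<le> k \<and> k \<le> 2*n - 1 \<and> k \<noteq> n \<longrightarrow> card (Zset \<theta> (2*n) \<inter> Iint (2*n) k) = 1)"
  proof (intro exI[of _ 1] allI impI)
    fix n :: nat assume n: "n \<ge> 1"
    have a: "finite (Zset \<theta> (2*n) \<inter> Iint (2*n) 0) \<and> card (Zset \<theta> (2*n) \<inter> Iint (2*n) 0) \<le> 1"
      using ZI_atmost1[OF assms n, of 0] n by simp
    have b: "finite (Zset \<theta> (2*n) \<inter> Iint (2*n) (2*n)) \<and> card (Zset \<theta> (2*n) \<inter> Iint (2*n) (2*n)) \<le> 1"
      using ZI_atmost1[OF assms n, of "2*n"] n by simp
    show "finite (Zset \<theta> (2*n) \<inter> Iint (2*n) 0) \<and> card (Zset \<theta> (2*n) \<inter> Iint (2*n) 0) \<le> 3 \<and>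
       finite (Zset \<theta> (2*n) \<inter> Iint (2*n) (2*n)) \<and> card (Zset \<theta> (2*n) \<inter> Iint (2*n) (2*n)) \<le> 3 \<and>
       Zset \<theta> (2*n) \<inter> Iint (2*n) n = {} \<and>
       {0, pi} \<subseteq> Zset \<theta> (2*n) \<and>
       (\<forall>k::nat. 1 \<le> k \<and> k \<le> 2*n - 1 \<and> k \<noteq> n \<longrightarrow> card (Zset \<theta> (2*n) \<inter> Iint (2*n) k) = 1)"
      using a b ZI_mid[OF assms n] Z_ends[where n=n and \<theta>=\<theta>] ZI_one[OF assms n] by auto
  qed
  have vi: "\<exists>N. \<forall>n\<ge>N.
       finite (spec (Mmat \<theta> n) \<inter> cosimg \<theta> (Iint (2*n) 0)) \<and>
       card (spec (Mmat \<theta> n) \<inter> cosimg \<theta> (Iint (2*n) 0)) \<le> 3 \<and>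
       finite (spec (Mmat \<theta> n) \<inter> cosimg \<theta> (Iint (2*n) (2*n))) \<and>
       card (spec (Mmat \<theta> n) \<inter> cosimg \<theta> (Iint (2*n) (2*n))) \<le> 3 \<and>
       spec (Mmat \<theta> n) \<inter> cosimg \<theta> (Iint (2*n) n) = {} \<and>
       (\<forall>k::nat. 1 \<le> k \<and> k \<le> 2*n - 1 \<and> k \<noteq> n \<longrightarrow>
          finite (spec (Mmat \<theta> n) \<inter> cosimg \<theta> (Iint (2*n) k)) \<and>
          card (spec (Mmat \<theta> n) \<inter> cosimg \<theta> (Iint (2*n) k)) \<le> 1)"
    using part_vi[OF assms] by (intro exI[of _ 1]) auto
  have v: "\<theta> = pi / 2 \<longrightarrow> (\<forall>n::nat. n \<ge> 1 \<longrightarrow>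
       Zset \<theta> (2*n) \<inter> {0..pi} \<subseteq>
         {0, pi} \<union> {(2 * real j - 1) / (4 * real n) * pi | j. j \<in> {1..2*n}})"
    using part_v by blast
  have vii: "\<theta> = pi / 2 \<longrightarrow> (\<forall>n::nat. n \<ge> 1 \<longrightarrow>
       spec (Mmat \<theta> n) \<subseteq> {-2, 2} \<union> {2 * cos ((2 * real k - 1) / (4 * real n) * pi) | k. k \<in> {1..2*n}})"
    using part_vii by blast
  show ?thesis using i ii iii iv v vi vii part_viii[OF assms] by blast
qed

end
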